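(* Consider an instance of the constructive \$-protection problem (all voter weights equal to 1) and let $\mathcal{V}_F\subseteq\mathcal{V}$ be the set of awarded voters. Suppose the attacker can make the designated candidate $c^\star$ win (obtain a total score strictly higher than every other candidate) by bribing a set $\mathcal{V}_B\subseteq\mathcal{V}\setminus\mathcal{V}_F$ with $\sum_{v_j\in\mathcal{V}_B}p_j^b\le B$. If $v_{j'}\prec v_j$, $v_{j'}\in\mathcal{V}_B$ and $v_j\notin\mathcal{V}_F\cup\mathcal{V}_B$, then the attacker can also make $c^\star$ win by bribing $(\mathcal{V}_B\setminus\{v_{j'}\})\cup\{v_j\}$ (within budget $B$).
   Context: Election model. Candidates $\mathcal{C}=\{c_1,\dots,c_m\}$, voters $\mathcal{V}=\{v_1,\dots,v_n\}$; voter $v_j$ has a preference list $\tau_j$ (a linear order of $\mathcal{C}$), weight $w_j$, awarding price $p_j^a\in\mathbb{Z}_{>0}$, bribing price $p_j^b\in\mathbb{Z}_{>0}$. A scoring rule $\alpha=(\alpha_1\ge\cdots\ge\alpha_m)$ of nonnegative integers gives the candidate at position $z$ of $v_j$'s list $w_j\alpha_z$ points; total score is the sum over voters. In the constructive \$-protection problem all $w_j=1$, there is a designated candidate $c^\star$, a defense budget $F$ and an attack budget $B$; the attacker may choose $\mathcal{V}_B\subseteq\mathcal{V}\setminus\mathcal{V}_F$ with total bribing price at most $B$ and replace each list in $\mathcal{V}_B$ by an arbitrary list. Dominance: $v_{j'}\prec v_j$ if either (i) $\tau_j=\tau_{j'}$, $w_j\ge w_{j'}$, $p_j^a\le p_{j'}^a$,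 $p_j^b\le p_{j'}^b$ with at least one of these three inequalities strict; or (ii) $\tau_j=\tau_{j'}$, $w_j=w_{j'}$, $p_j^a=p_{j'}^a$, $p_j^b=p_{j'}^b$ and $j'<j$. *)

theory Defs
  imports Main
begin

text \<open>A preference list is a linear order of the candidate set C, represented as a
list without repetitions containing exactly the candidates of C (first = most preferred).\<close>
definition is_pref :: "'c set \<Rightarrow> 'c list \<Rightarrow> bool" where
  "is_pref C l \<longleftrightarrow> distinct l \<and> set l = C"

text \<open>Points given by list l to candidate c under scoring rule alpha (positions are 1-based:
the candidate at position z receives alpha z points, times the voter weight).\<close>
definition points :: "(nat \<Rightarrow> nat) \<Rightarrow> 'c list \<Rightarrow> 'c \<Rightarrow> nat" where
  "points alpha l c = (\<Sum>i<length l. if l ! i = c then alpha (Suc i) else 0)"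

definition score :: "(nat \<Rightarrow> nat) \<Rightarrow> (nat \<Rightarrow> nat) \<Rightarrow> nat set \<Rightarrow> (nat \<Rightarrow> 'c list) \<Rightarrow> 'c \<Rightarrow> nat" where
  "score alpha w V tau c = (\<Sum>j\<in>V. w j * points alpha (tau j) c)"

definition wins :: "(nat \<Rightarrow> nat) \<Rightarrow> (nat \<Rightarrow> nat) \<Rightarrow> 'c set \<Rightarrow> nat set \<Rightarrow> (nat \<Rightarrow> 'c list) \<Rightarrow> 'c \<Rightarrow> bool" where
  "wins alpha w C V tau c \<longleftrightarrow> (\<forall>d\<in>C - {c}. score alpha w V tau d < score alpha w V tau c)"

definition can_win_by :: "(nat \<Rightarrow> nat) \<Rightarrow> (nat \<Rightarrow> nat) \<Rightarrow> 'c set \<Rightarrow> nat set \<Rightarrow> (nat \<Rightarrow> 'c list) \<Rightarrow> 'c \<Rightarrow> nat set \<Rightarrow> bool" where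
  "can_win_by alpha w C V tau c VB \<longleftrightarrow>
     (\<exists>tau'. (\<forall>j\<in>VB. is_pref C (tau' j)) \<and>
             wins alpha w C V (\<lambda>j. if j \<in> VB then tau' j else tau j) c)"

text \<open>Dominance: dominated w tau pa pb j' j means v_j' \<prec> v_j.\<close>
definition dominated :: "(nat \<Rightarrow> nat) \<Rightarrow> (nat \<Rightarrow> 'c list) \<Rightarrow> (nat \<Rightarrow> nat) \<Rightarrow> (nat \<Rightarrow> nat) \<Rightarrow> nat \<Rightarrow> nat \<Rightarrow> bool" where
  "dominated w tau pa pb j' j \<longleftrightarrow>
     (tau j = tau j' \<and> w j \<ge> w j' \<and> pa j \<le> pa j' \<and> pb j \<le> pb j' \<and>
        (w j > w j' \<or> pa j < pa j' \<or> pb j < pb j'))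
   \<or> (tau j = tau j' \<and> w j = w j' \<and> pa j = pa j' \<and> pb j = pb j' \<and> j' < j)"

end

theory Submission
  imports Defs
begin

definition sw :: "nat \<Rightarrow> nat \<Rightarrow> nat \<Rightarrow> nat" where
  "sw a b i = (if i = a then b else if i = b then a else i)"

lemma sw_sw[simp]: "sw a b (sw a b j) = j"
  by (simp add: sw_def)

lemma score_swap:
  assumes "a \<in> V" "b \<in> V"
  shows "score alpha w V (P \<circ> sw a b) c = score alpha (w \<circ> sw a b) V P c"
proof -
  have bij: "bij_betw (sw a b) V V"
    using assms by (auto simp: bij_betw_def inj_on_def sw_def image_def split: if_splits)
  have "score alpha (w \<circ> sw a b) V P c
      = (\<Sum>j\<in>V. w (sw a b j) * points alpha (P j) c)"
    by (simp add: score_def)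
  also have "\<dots> = (\<Sum>j\<in>V. w (sw a b (sw a b j)) * points alpha (P (sw a b j)) c)"
    using sum.reindex_bij_betw[OF bij, of "\<lambda>j. w (sw a b j) * points alpha (P j) c"]
    by simp
  finally show ?thesis by (simp add: score_def)
qed

theorem lemma7:
  fixes C :: "'c set" and cstar :: 'c and alpha :: "nat \<Rightarrow> nat"
    and n :: nat and tau :: "nat \<Rightarrow> 'c list" and pa pb :: "nat \<Rightarrow> nat"
    and F B :: nat and VF VB :: "nat set" and j j' :: nat
  assumes C_fin: "finite C" and cstar_in: "cstar \<in> C"
    and alpha_mono: "\<And>z z'. 1 \<le> z \<Longrightarrow> z \<le> z' \<Longrightarrow> z' \<le> card C \<Longrightarrow> alpha z' \<le> alpha z"
    and prefs: "\<And>i. i \<in> {..<n} \<Longrightarrow> is_pref C (tau i)"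
    and pa_pos: "\<And>i. i \<in> {..<n} \<Longrightarrow> pa i > 0"
    and pb_pos: "\<And>i. i \<in> {..<n} \<Longrightarrow> pb i > 0"
    and VF_sub: "VF \<subseteq> {..<n}" and VF_budget: "(\<Sum>i\<in>VF. pa i) \<le> F"
    and VB_sub: "VB \<subseteq> {..<n} - VF" and VB_budget: "(\<Sum>i\<in>VB. pb i) \<le> B"
    and VB_win: "can_win_by alpha (\<lambda>_. 1) C {..<n} tau cstar VB"
    and dom: "dominated (\<lambda>_. 1) tau pa pb j' j"
    and j'_in: "j' \<in> VB"
    and j_in: "j \<in> {..<n}" and j_notin: "j \<notin> VF \<union> VB"
  shows "(VB - {j'}) \<union> {j} \<subseteq> {..<n} - VF
       \<and> (\<Sum>i\<in>(VB - {j'}) \<union> {j}. pb i) \<le> B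
       \<and> can_win_by alpha (\<lambda>_. 1) C {..<n} tau cstar ((VB - {j'}) \<union> {j})"
proof (intro conjI)
  have jj: "j \<noteq> j'" using j_notin j'_in by auto
  have tj: "tau j = tau j'" and pbj: "pb j \<le> pb j'" using dom by (auto simp: dominated_def)
  show "(VB - {j'}) \<union> {j} \<subseteq> {..<n} - VF" using VB_sub j_in j_notin by auto
  have fin: "finite VB" using VB_sub finite_subset by blast
  have "(\<Sum>i\<in>(VB - {j'}) \<union> {j}. pb i) = (\<Sum>i\<in>VB - {j'}. pb i) + pb j"
    using fin j_notin by (simp add: sum.insert_if)
  moreover have "(\<Sum>i\<in>VB. pb i) = (\<Sum>i\<in>VB - {j'}. pb i) + pb j'"
    using fin j'_in by (metis add.commute sum.remove)
  ultimately show "(\<Sum>i\<in>(VB - {j'}) \<union> {j}. pb i) \<le> B" using VB_budget pbj by linarith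
  obtain tau' where t1: "\<forall>i\<in>VB. is_pref C (tau' i)"
    and t2: "wins alpha (\<lambda>_. 1) C {..<n} (\<lambda>i. if i \<in> VB then tau' i else tau i) cstar"
    using VB_win by (auto simp: can_win_by_def)
  define P where "P = (\<lambda>i. if i \<in> VB then tau' i else tau i)"
  define t'' where "t'' = tau'(j := tau' j')"
  have eq: "(\<lambda>i. if i \<in> (VB - {j'}) \<union> {j} then t'' i else tau i) = P \<circ> sw j j'"
  proof
    fix i show "(if i \<in> (VB - {j'}) \<union> {j} then t'' i else tau i) = (P \<circ> sw j j') i"
      using jj j_notin j'_in tj by (auto simp: P_def t''_def sw_def)
  qed
  have sc: "score alpha (\<lambda>_. 1) {..<n} (P \<circ> sw j j') c = score alpha (\<lambda>_. 1) {..<n} P c" for c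
    using score_swap[OF j_in, of j' alpha "\<lambda>_. 1" P c] j'_in VB_sub by (auto simp: comp_def)
  show "can_win_by alpha (\<lambda>_. 1) C {..<n} tau cstar ((VB - {j'}) \<union> {j})"
    unfolding can_win_by_def
  proof (intro exI conjI)
    show "\<forall>i\<in>(VB - {j'}) \<union> {j}. is_pref C (t'' i)" using t1 j'_in by (auto simp: t''_def)
    show "wins alpha (\<lambda>_. 1) C {..<n} (\<lambda>i. if i \<in> (VB - {j'}) \<union> {j} then t'' i else tau i) cstar"
      unfolding eq using t2 sc by (simp add: wins_def P_def)
  qed
qed

end
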